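(* Let $(A,\to,1)$ be an algebra of type $(2,0)$ satisfying (Re), (M) and (Ex). Then $(A,\to,1)$ satisfies ( ** ) if and only if it satisfies (Tr).
   Context: Properties, required for all $x,y,z\in A$: (Re) $x\to x=1$; (M) $1\to x=x$; (Ex) $x\to(y\to z)=y\to(x\to z)$; ( ** ) $y\to z=1$ implies $(z\to x)\to(y\to x)=1$; (Tr) $x\to y=1$ and $y\to z=1$ imply $x\to z=1$. *)

theory Defs
  imports Main
begin

(* An algebra (A, imp, one) of type (2,0); A is the whole type 'a. *)

definition prop_Re :: "('a \<Rightarrow> 'a \<Rightarrow> 'a) \<Rightarrow> 'a \<Rightarrow> bool" where
  "prop_Re imp one \<longleftrightarrow> (\<forall>x. imp x x = one)"

definition prop_M :: "('a \<Rightarrow> 'a \<Rightarrow> 'a) \<Rightarrow> 'a \<Rightarrow> bool" where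
  "prop_M imp one \<longleftrightarrow> (\<forall>x. imp one x = x)"

definition prop_Ex :: "('a \<Rightarrow> 'a \<Rightarrow> 'a) \<Rightarrow> bool" where
  "prop_Ex imp \<longleftrightarrow> (\<forall>x y z. imp x (imp y z) = imp y (imp x z))"

definition prop_SS :: "('a \<Rightarrow> 'a \<Rightarrow> 'a) \<Rightarrow> 'a \<Rightarrow> bool" where
  "prop_SS imp one \<longleftrightarrow> (\<forall>x y z. imp y z = one \<longrightarrow> imp (imp z x) (imp y x) = one)"

definition prop_Tr :: "('a \<Rightarrow> 'a \<Rightarrow> 'a) \<Rightarrow> 'a \<Rightarrow> bool" where
  "prop_Tr imp one \<longleftrightarrow> (\<forall>x y z. imp x y = one \<longrightarrow> imp y z = one \<longrightarrow> imp x z = one)"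

end

theory Submission
  imports Defs
begin

theorem theorem2p3:
  fixes imp :: "'a \<Rightarrow> 'a \<Rightarrow> 'a" and one :: 'a
  assumes "prop_Re imp one" and "prop_M imp one" and "prop_Ex imp"
  shows "prop_SS imp one \<longleftrightarrow> prop_Tr imp one"
proof
  assume S: "prop_SS imp one"
  show "prop_Tr imp one" unfolding prop_Tr_def
  proof (intro allI impI)
    fix x y z assume h1: "imp x y = one" and h2: "imp y z = one"
    have "imp (imp y z) (imp x z) = one" using S h1 unfolding prop_SS_def by blast
    thus "imp x z = one" using h2 assms(2) unfolding prop_M_def by simp
  qed
next
  assume T: "prop_Tr imp one"
  show "prop_SS imp one" unfolding prop_SS_def
  proof (intro allI impI)
    fix x y z assume h: "imp y z = one"
    have "imp z (imp (imp z x) x) = one"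
      using assms(1,3) unfolding prop_Re_def prop_Ex_def by metis
    hence "imp y (imp (imp z x) x) = one" using T h unfolding prop_Tr_def by blast
    thus "imp (imp z x) (imp y x) = one" using assms(3) unfolding prop_Ex_def by metis
  qed
qed

end
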